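(* The Hasse index of order 3 of the class of Dyck lattices is asymptotically Boolean, i.e. $i_3(\mathcal{D}_n)=\frac{sc_3(\mathcal{D}_n)}{|\mathcal{D}_n|}\sim\frac{n^3}{8}$ as $n\to\infty$.
   Context: A Dyck path of semilength $n$ is a lattice path from $(0,0)$ to $(2n,0)$ with steps $(1,1)$ and $(1,-1)$ never going below the $x$-axis. $\mathcal{D}_n$ is the set of Dyck paths of semilength $n$ ordered by containment: $\gamma\le\gamma'$ iff $\gamma$ lies weakly below $\gamma'$. A saturated chain of length $h$ is a sequence $\gamma^{(0)}<\cdots<\gamma^{(h)}$ in which each element covers the previous one; $sc_h(\mathcal{P})$ is the number of saturated chains of length $h$ in a poset $\mathcal{P}$, and the Hasse index of order $h$ is $i_h(\mathcal{P})=sc_h(\mathcal{P})/|\mathcal{P}|$. A sequence of posets $(\mathcal{P}_n)$ has asymptotically Boolean Hasse index of order $h$ if $i_h(\mathcal{P}_n)\sim n^h/2^h$. *)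

theory Defs
  imports Complex_Main "HOL-Library.Landau_Symbols"
begin

definition covers :: "'a set \<Rightarrow> ('a \<Rightarrow> 'a \<Rightarrow> bool) \<Rightarrow> 'a \<Rightarrow> 'a \<Rightarrow> bool" where
  "covers P lt x y \<longleftrightarrow> x \<in> P \<and> y \<in> P \<and> lt x y \<and> \<not> (\<exists>z\<in>P. lt x z \<and> lt z y)"

definition sat_chains :: "'a set \<Rightarrow> ('a \<Rightarrow> 'a \<Rightarrow> bool) \<Rightarrow> nat \<Rightarrow> 'a list set" where
  "sat_chains P lt h = {cs. length cs = Suc h \<and> set cs \<subseteq> P \<and>
      (\<forall>i<h. covers P lt (cs ! i) (cs ! Suc i))}"

definition sc :: "'a set \<Rightarrow> ('a \<Rightarrow> 'a \<Rightarrow> bool) \<Rightarrow> nat \<Rightarrow> nat" where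
  "sc P lt h = card (sat_chains P lt h)"

definition hasse_index :: "'a set \<Rightarrow> ('a \<Rightarrow> 'a \<Rightarrow> bool) \<Rightarrow> nat \<Rightarrow> real" where
  "hasse_index P lt h = real (sc P lt h) / real (card P)"

text \<open>Dyck paths: lists of steps, True = up step (1,1), False = down step (1,-1).\<close>
definition height :: "bool list \<Rightarrow> nat \<Rightarrow> int" where
  "height xs i = (\<Sum>b\<leftarrow>take i xs. if b then 1 else -1)"

definition dyck :: "nat \<Rightarrow> bool list set" where
  "dyck n = {xs. length xs = 2 * n \<and> (\<forall>i\<le>2 * n. 0 \<le> height xs i) \<and> height xs (2 * n) = 0}"

definition dyck_le :: "bool list \<Rightarrow> bool list \<Rightarrow> bool" where
  "dyck_le xs ys \<longleftrightarrow> length xs = length ys \<and> (\<forall>i\<le>length xs. height xs i \<le> height ys i)"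

definition dyck_lt :: "bool list \<Rightarrow> bool list \<Rightarrow> bool" where
  "dyck_lt xs ys \<longleftrightarrow> dyck_le xs ys \<and> xs \<noteq> ys"

end

theory Submission
  imports Defs "HOL-Real_Asymp.Real_Asymp"
begin


definition hsum :: "bool list \<Rightarrow> int" where
  "hsum xs = sum_list (map (\<lambda>b. if b then 1 else -1) xs)"

lemma height_hsum: "height xs i = hsum (take i xs)"
  by (simp add: height_def hsum_def)

lemma hsum_append[simp]: "hsum (xs @ ys) = hsum xs + hsum ys"
  by (simp add: hsum_def)

lemma hsum_Cons[simp]: "hsum (b # xs) = (if b then 1 else -1) + hsum xs"
  by (simp add: hsum_def)

lemma hsum_Nil[simp]: "hsum [] = 0"
  by (simp add: hsum_def)

lemma height_0[simp]: "height xs 0 = 0"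
  by (simp add: height_hsum)

lemma height_Suc: "i < length xs \<Longrightarrow> height xs (Suc i) = height xs i + (if xs!i then 1 else -1)"
  by (simp add: height_hsum take_Suc_conv_app_nth)

lemma height_parity: "i \<le> length xs \<Longrightarrow> even (height xs i + int i)"
proof (induction i)
  case 0 then show ?case by simp
next
  case (Suc i)
  then show ?case by (simp add: height_Suc)
qed

lemma heights_eq_imp_eq:
  assumes "length xs = length ys" "\<And>i. i \<le> length xs \<Longrightarrow> height xs i = height ys i"
  shows "xs = ys"
proof (rule nth_equalityI)
  show "length xs = length ys" by fact
  fix i assume i: "i < length xs"
  have "height xs (Suc i) = height ys (Suc i)" "height xs i = height ys i" using assms i by auto
  then show "xs ! i = ys ! i" using height_Suc[of i xs] height_Suc[of i ys] i assms(1)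
    by (auto split: if_splits)
qed

definition valleys :: "bool list \<Rightarrow> nat set" where
  "valleys xs = {i. Suc i < length xs \<and> \<not> xs!i \<and> xs!(Suc i)}"

definition val :: "bool list \<Rightarrow> nat" where
  "val xs = card (valleys xs)"

definition flip :: "bool list \<Rightarrow> nat \<Rightarrow> bool list" where
  "flip xs i = xs[i := True, Suc i := False]"

lemma finite_valleys[simp]: "finite (valleys xs)"
  by (rule finite_subset[of _ "{..<length xs}"]) (auto simp: valleys_def)

lemma val_le: "val xs \<le> length xs"
proof -
  have "valleys xs \<subseteq> {..<length xs}" by (auto simp: valleys_def)
  then show ?thesis unfolding val_def using card_mono[of "{..<length xs}"] by fastforce
qed

lemma length_flip[simp]: "length (flip xs i) = length xs"
  by (simp add: flip_def)

lemma height_flip: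
  assumes "i \<in> valleys xs" "k \<le> length xs"
  shows "height (flip xs i) k = height xs k + (if k = Suc i then 2 else 0)"
  using assms(2)
proof (induction k)
  case 0 then show ?case by simp
next
  case (Suc k)
  have v: "Suc i < length xs" "\<not> xs!i" "xs!(Suc i)" using assms(1) by (auto simp: valleys_def)
  have k: "k < length xs" using Suc by simp
  have IH: "height (flip xs i) k = height xs k + (if k = Suc i then 2 else 0)" using Suc by simp
  have fk: "flip xs i ! k = (if k = Suc i then False else if k = i then True else xs ! k)"
    using v k by (simp add: flip_def nth_list_update)
  show ?case using v k IH fk height_Suc[of k xs] height_Suc[of k "flip xs i"]
    by auto
qed

lemma even_sub_aux: "even ((a::int) + c) \<Longrightarrow> even (b + c) \<Longrightarrow> even (a - b)"
proof -
  assume "even (a+c)" "even (b+c)"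
  then have "even ((a+c) - (b+c))" by (rule even_diff[THEN iffD2, OF even_add[THEN iffD2]] | simp)
  then show ?thesis by simp
qed

lemma height_step:
  assumes "i < length xs"
  shows "height xs (Suc i) \<le> height xs i + 1" "height xs i - 1 \<le> height xs (Suc i)"
  using height_Suc[OF assms] by auto

lemma flip_dyck:
  assumes "xs \<in> dyck n" "i \<in> valleys xs"
  shows "flip xs i \<in> dyck n"
proof -
  have v: "Suc i < length xs" using assms(2) by (auto simp: valleys_def)
  have l: "length xs = 2*n" and h: "\<And>k. k \<le> 2*n \<Longrightarrow> 0 \<le> height xs k" and e: "height xs (2*n) = 0"
    using assms(1) by (auto simp: dyck_def)
  have "\<And>k. k \<le> 2*n \<Longrightarrow> 0 \<le> height (flip xs i) k"
  proof -
    fix k assume "k \<le> 2*n"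
    then show "0 \<le> height (flip xs i) k" using height_flip[OF assms(2), of k] h[of k] l by simp
  qed
  moreover have "height (flip xs i) (2*n) = 0" using height_flip[OF assms(2), of "2*n"] e l v by simp
  ultimately show ?thesis using l by (simp add: dyck_def)
qed

lemma flip_lt:
  assumes "i \<in> valleys xs"
  shows "dyck_lt xs (flip xs i)"
proof -
  have v: "Suc i < length xs" using assms by (auto simp: valleys_def)
  have "height (flip xs i) (Suc i) \<noteq> height xs (Suc i)" using height_flip[OF assms, of "Suc i"] v by simp
  then have "flip xs i \<noteq> xs" by auto
  then show ?thesis unfolding dyck_lt_def dyck_le_def using height_flip[OF assms] by auto
qed

lemma flip_covers:
  assumes "xs \<in> dyck n" "i \<in> valleys xs"
  shows "covers (dyck n) dyck_lt xs (flip xs i)"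
  unfolding covers_def
proof (intro conjI)
  show "xs \<in> dyck n" "flip xs i \<in> dyck n" "dyck_lt xs (flip xs i)"
    using assms flip_dyck flip_lt by auto
  show "\<not> (\<exists>z\<in>dyck n. dyck_lt xs z \<and> dyck_lt z (flip xs i))"
  proof
    assume "\<exists>z\<in>dyck n. dyck_lt xs z \<and> dyck_lt z (flip xs i)"
    then obtain z where z: "dyck_lt xs z" "dyck_lt z (flip xs i)" by blast
    have lz: "length z = length xs" using z by (simp add: dyck_lt_def dyck_le_def)
    have lo: "\<And>k. k \<le> length xs \<Longrightarrow> height xs k \<le> height z k"
      using z(1) unfolding dyck_lt_def dyck_le_def by blast
    have hi: "\<And>k. k \<le> length xs \<Longrightarrow> height z k \<le> height xs k + (if k = Suc i then 2 else 0)"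
    proof -
      fix k assume k: "k \<le> length xs"
      have "height z k \<le> height (flip xs i) k" using z(2) k lz unfolding dyck_lt_def dyck_le_def by auto
      then show "height z k \<le> height xs k + (if k = Suc i then 2 else 0)" using height_flip[OF assms(2) k] by simp
    qed
    have v: "Suc i < length xs" using assms(2) by (auto simp: valleys_def)
    have p1: "even (height z (Suc i) + int (Suc i))" using height_parity[of "Suc i" z] v lz by simp
    have p2: "even (height xs (Suc i) + int (Suc i))" using height_parity[of "Suc i" xs] v by simp
    have "height z (Suc i) = height xs (Suc i) \<or> height z (Suc i) = height xs (Suc i) + 2"
    proof -
      have a: "height xs (Suc i) \<le> height z (Suc i)" "height z (Suc i) \<le> height xs (Suc i) + 2"
        using lo[of "Suc i"] hi[of "Suc i"] v by auto
      have "even (height z (Suc i) - height xs (Suc i))" using p1 p2 by (rule even_sub_aux)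
      then obtain t where t: "height z (Suc i) - height xs (Suc i) = 2 * t" by (rule evenE)
      then show ?thesis using a by presburger
    qed
    then show False
    proof
      assume e: "height z (Suc i) = height xs (Suc i)"
      have "\<And>k. k \<le> length z \<Longrightarrow> height z k = height xs k"
      proof -
        fix k assume "k \<le> length z"
        then show "height z k = height xs k" using lo[of k] hi[of k] e lz
          by (cases "k = Suc i") auto
      qed
      then have "z = xs" using lz heights_eq_imp_eq by blast
      then show False using z(1) by (simp add: dyck_lt_def)
    next
      assume e: "height z (Suc i) = height xs (Suc i) + 2"
      have "\<And>k. k \<le> length z \<Longrightarrow> height z k = height (flip xs i) k"
      proof -
        fix k assume "k \<le> length z"
        then show "height z k = height (flip xs i) k" using lo[of k] hi[of k] e lz height_flip[OF assms(2), of k]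
          by (cases "k = Suc i") auto
      qed
      then have "z = flip xs i" using lz heights_eq_imp_eq[of z "flip xs i"] by simp
      then show False using z(2) by (simp add: dyck_lt_def)
    qed
  qed
qed

lemma covers_flip:
  assumes c: "covers (dyck n) dyck_lt xs ys"
  shows "\<exists>i\<in>valleys xs. ys = flip xs i"
proof -
  have xd: "xs \<in> dyck n" and yd: "ys \<in> dyck n" and lt: "dyck_lt xs ys"
    and nz: "\<not> (\<exists>z\<in>dyck n. dyck_lt xs z \<and> dyck_lt z ys)"
    using c by (auto simp: covers_def)
  have lx: "length xs = 2*n" and hx0: "\<And>k. k \<le> 2*n \<Longrightarrow> 0 \<le> height xs k" and hxe: "height xs (2*n) = 0"
    using xd by (auto simp: dyck_def)
  have ly: "length ys = 2*n" and hye: "height ys (2*n) = 0"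
    using yd by (auto simp: dyck_def)
  have le: "\<And>k. k \<le> 2*n \<Longrightarrow> height xs k \<le> height ys k"
    using lt lx by (auto simp: dyck_lt_def dyck_le_def)
  define K where "K = {k. k \<le> 2*n \<and> height xs k < height ys k}"
  have "K \<noteq> {}"
  proof
    assume "K = {}"
    then have "\<And>k. k \<le> length xs \<Longrightarrow> height xs k = height ys k"
      using le lx unfolding K_def by force
    then have "xs = ys" using heights_eq_imp_eq lx ly by simp
    then show False using lt by (simp add: dyck_lt_def)
  qed
  then obtain k0 where "k0 \<in> K" by blast
  then obtain k where kK: "k \<in> K" and kmin: "\<And>k'. k' \<in> K \<Longrightarrow> nat (height xs k) \<le> nat (height xs k')"
    using ex_has_least_nat[of "\<lambda>k. k \<in> K" k0 "\<lambda>k. nat (height xs k)"] by blast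
  have kmin': "\<And>k'. k' \<in> K \<Longrightarrow> height xs k \<le> height xs k'"
  proof -
    fix k' assume "k' \<in> K"
    then show "height xs k \<le> height xs k'" using kmin[of k'] hx0 kK unfolding K_def by force
  qed
  have k2: "k \<le> 2*n" and kgt: "height xs k < height ys k" using kK by (auto simp: K_def)
  have "k \<noteq> 0" using kgt by (cases k) auto
  moreover have "k \<noteq> 2*n" using kgt hxe hye by auto
  ultimately obtain i where ki: "k = Suc i" and ik: "Suc i < 2*n" using k2
    by (metis le_neq_implies_less not0_implies_Suc)
  have xi: "\<not> xs ! i"
  proof
    assume a: "xs ! i"
    have "height xs k = height xs i + 1" using height_Suc[of i xs] a ki lx ik by simp
    moreover have "height ys i \<ge> height ys k - 1" using height_step[of i ys] ki ly ik by simp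
    ultimately have "i \<in> K" using kgt ik unfolding K_def by simp
    then have "height xs k \<le> height xs i" using kmin' by blast
    then show False using \<open>height xs k = height xs i + 1\<close> by simp
  qed
  have xk: "xs ! k"
  proof (rule ccontr)
    assume a: "\<not> xs ! k"
    have "height xs (Suc k) = height xs k - 1" using height_Suc[of k xs] a ki lx ik by simp
    moreover have "height ys (Suc k) \<ge> height ys k - 1" using height_step[of k ys] ki ly ik by simp
    ultimately have "Suc k \<in> K" using kgt ik ki unfolding K_def by simp
    then have "height xs k \<le> height xs (Suc k)" using kmin' by blast
    then show False using \<open>height xs (Suc k) = height xs k - 1\<close> by simp
  qed
  have iv: "i \<in> valleys xs" using xi xk ki ik lx by (simp add: valleys_def)
  have p1: "even (height ys k + int k)" using height_parity[of k ys] ly k2 by simp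
  have p2: "even (height xs k + int k)" using height_parity[of k xs] lx k2 by simp
  have "even (height ys k - height xs k)" using p1 p2 by (rule even_sub_aux)
  then obtain t where t: "height ys k - height xs k = 2 * t" by (rule evenE)
  then have k2h: "height xs k + 2 \<le> height ys k" using kgt by presburger
  define z where "z = flip xs i"
  have zd: "z \<in> dyck n" using flip_dyck[OF xd iv] z_def by simp
  have xz: "dyck_lt xs z" using flip_lt[OF iv] z_def by simp
  have zy: "dyck_le z ys"
    unfolding dyck_le_def
  proof (intro conjI allI impI)
    show "length z = length ys" using z_def lx ly by simp
    fix j assume "j \<le> length z"
    then have j: "j \<le> length xs" using z_def by simp
    show "height z j \<le> height ys j"
      using height_flip[OF iv j] le[of j] j lx k2h ki z_def by auto
  qed
  show ?thesis
  proof (cases "z = ys")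
    case True then show ?thesis using iv z_def by blast
  next
    case False
    then have "dyck_lt z ys" using zy by (simp add: dyck_lt_def)
    then show ?thesis using nz zd xz by blast
  qed
qed

lemma inj_flip: "inj_on (flip xs) (valleys xs)"
proof (rule inj_onI)
  fix i j assume i: "i \<in> valleys xs" and j: "j \<in> valleys xs" and e: "flip xs i = flip xs j"
  show "i = j"
  proof (rule ccontr)
    assume ne: "i \<noteq> j"
    have vi: "Suc i < length xs" "\<not> xs!i" "xs!(Suc i)" using i by (auto simp: valleys_def)
    have vj: "Suc j < length xs" "\<not> xs!j" "xs!(Suc j)" using j by (auto simp: valleys_def)
    have "flip xs i ! i" using vi by (simp add: flip_def nth_list_update)
    moreover have "\<not> flip xs j ! i" using vi vj ne by (auto simp: flip_def nth_list_update)
    ultimately show False using e by simp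
  qed
qed

definition cov :: "nat \<Rightarrow> bool list \<Rightarrow> bool list set" where
  "cov n xs = {ys. covers (dyck n) dyck_lt xs ys}"

lemma cov_eq: "xs \<in> dyck n \<Longrightarrow> cov n xs = flip xs ` valleys xs"
  unfolding cov_def using covers_flip flip_covers by blast

lemma card_cov: "xs \<in> dyck n \<Longrightarrow> card (cov n xs) = val xs"
  using cov_eq inj_flip card_image val_def by metis




lemma nth_flip: "i \<in> valleys xs \<Longrightarrow> j < length xs \<Longrightarrow>
  flip xs i ! j = (if j = Suc i then False else if j = i then True else xs ! j)"
  by (auto simp: flip_def nth_list_update valleys_def)

lemma val_flip:
  assumes iv: "i \<in> valleys xs"
  shows "val xs \<le> val (flip xs i) + 1" "val (flip xs i) \<le> val xs + 1"
proof -
  have v: "Suc i < length xs" "\<not> xs!i" "xs!(Suc i)" using iv by (auto simp: valleys_def)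
  have s1: "valleys xs - {i} \<subseteq> valleys (flip xs i)"
  proof
    fix j assume j: "j \<in> valleys xs - {i}"
    then have vj: "Suc j < length xs" "\<not> xs!j" "xs!(Suc j)" "j \<noteq> i" by (auto simp: valleys_def)
    have "j \<noteq> Suc i" using vj v by auto
    moreover have "Suc j \<noteq> i" using vj v by auto
    ultimately show "j \<in> valleys (flip xs i)" using vj nth_flip[OF iv] by (auto simp: valleys_def)
  qed
  have s2: "valleys (flip xs i) \<subseteq> (valleys xs - {i}) \<union> {i - 1, Suc i}"
  proof
    fix j assume j: "j \<in> valleys (flip xs i)"
    then have vj: "Suc j < length xs" "\<not> flip xs i!j" "flip xs i!(Suc j)" by (auto simp: valleys_def)
    show "j \<in> (valleys xs - {i}) \<union> {i - 1, Suc i}"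
    proof (cases "j = i \<or> j = i - 1 \<or> j = Suc i")
      case True
      moreover have "j \<noteq> i" using vj nth_flip[OF iv, of j] by auto
      ultimately show ?thesis by auto
    next
      case False
      then have "Suc j \<noteq> i" "Suc j \<noteq> Suc i" by auto
      then show ?thesis using False vj nth_flip[OF iv] by (auto simp: valleys_def)
    qed
  qed
  have c1: "card (valleys xs - {i}) + 1 = val xs" using iv unfolding val_def
    by (metis Suc_eq_plus1 card_Suc_Diff1 finite_valleys)
  have "card (valleys xs - {i}) \<le> val (flip xs i)" unfolding val_def
    using s1 by (intro card_mono) auto
  then show "val xs \<le> val (flip xs i) + 1" using c1 by simp
  have "val (flip xs i) \<le> card ((valleys xs - {i}) \<union> {i - 1, Suc i})" unfolding val_def
    using s2 by (intro card_mono) auto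
  also have "\<dots> \<le> card (valleys xs - {i}) + card {i - 1, Suc i}" by (rule card_Un_le)
  also have "\<dots> \<le> card (valleys xs - {i}) + 2" using card_insert_le[of "{Suc i}" "i-1"] by simp
  finally show "val (flip xs i) \<le> val xs + 1" using c1 by simp
qed

lemma cov_props:
  assumes "a \<in> dyck n" "b \<in> cov n a"
  shows "b \<in> dyck n" "val a \<le> val b + 1" "val b \<le> val a + 1"
  using assms cov_eq[OF assms(1)] flip_dyck val_flip by auto

lemma finite_dyck: "finite (dyck n)"
proof -
  have "dyck n \<subseteq> {xs. set xs \<subseteq> UNIV \<and> length xs = 2*n}" by (auto simp: dyck_def)
  then show ?thesis using finite_lists_length_eq[of "UNIV :: bool set"] finite_subset by auto
qed

lemma finite_cov: "finite (cov n a)"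
  by (rule finite_subset[OF _ finite_dyck[of n]]) (auto simp: cov_def covers_def)

lemma sat3_eq:
  "sat_chains P lt 3 = (\<lambda>(a,b,c,d). [a,b,c,d]) `
     (SIGMA a:P. SIGMA b:{b. covers P lt a b}. SIGMA c:{c. covers P lt b c}. {d. covers P lt c d})"
  (is "?L = ?f ` ?S")
proof
  show "?L \<subseteq> ?f ` ?S"
  proof
    fix cs assume cs: "cs \<in> ?L"
    then have l: "length cs = 4" and s: "set cs \<subseteq> P" and c: "\<And>i. i < 3 \<Longrightarrow> covers P lt (cs!i) (cs!Suc i)"
      by (auto simp: sat_chains_def)
    obtain a b c d where "cs = [a,b,c,d]" using l by (auto simp: length_Suc_conv numeral_eq_Suc)
    then have e: "cs = [cs!0, cs!1, cs!2, cs!3]" by simp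
    have "cs!0 \<in> P" using s l by (simp add: subset_code(1))
    moreover have "covers P lt (cs!0) (cs!1)" "covers P lt (cs!1) (cs!2)" "covers P lt (cs!2) (cs!3)"
      using c[of 0] c[of 1] c[of 2] by (auto simp: numeral_eq_Suc)
    ultimately have "(cs!0, cs!1, cs!2, cs!3) \<in> ?S" by auto
    then show "cs \<in> ?f ` ?S" using e by force
  qed
  show "?f ` ?S \<subseteq> ?L"
  proof
    fix cs assume "cs \<in> ?f ` ?S"
    then obtain a b c d where cs: "cs = [a,b,c,d]" and m: "a \<in> P" "covers P lt a b" "covers P lt b c" "covers P lt c d"
      by auto
    have "b \<in> P" "c \<in> P" "d \<in> P" using m by (auto simp: covers_def)
    then show "cs \<in> ?L" using m cs unfolding sat_chains_def
      by (auto simp: less_Suc_eq numeral_eq_Suc)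
  qed
qed

lemma sc_sum:
  "sc (dyck n) dyck_lt 3 = (\<Sum>a\<in>dyck n. \<Sum>b\<in>cov n a. \<Sum>c\<in>cov n b. val c)"
proof -
  let ?f = "(\<lambda>(a,b,c,d). [a,b,c,d]) :: bool list \<times> bool list \<times> bool list \<times> bool list \<Rightarrow> bool list list"
  have inj: "inj ?f" by (auto simp: inj_def)
  have "sc (dyck n) dyck_lt 3 = card (SIGMA a:dyck n. SIGMA b:cov n a. SIGMA c:cov n b. cov n c)"
    unfolding sc_def sat3_eq cov_def
    by (rule card_image) (rule inj_on_subset[OF inj], simp)
  also have "\<dots> = (\<Sum>a\<in>dyck n. \<Sum>b\<in>cov n a. \<Sum>c\<in>cov n b. card (cov n c))"
    by (simp add: card_SigmaI finite_dyck finite_cov)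
  also have "\<dots> = (\<Sum>a\<in>dyck n. \<Sum>b\<in>cov n a. \<Sum>c\<in>cov n b. val c)"
    by (intro sum.cong refl) (metis card_cov cov_props(1))
  finally show ?thesis .
qed

lemma lower_aux: "(y::nat) + 1 \<ge> x \<Longrightarrow> x \<ge> 1 \<Longrightarrow> real y * (real y - 1) \<ge> (real x - 1) * (real x - 2)"
proof -
  assume a: "y + 1 \<ge> x" "x \<ge> 1"
  have "real y \<ge> real x - 1" using a by linarith
  show ?thesis
  proof (cases "x = 1")
    case True
    have "real y * (real y - 1) \<ge> 0" by (cases y) auto
    then show ?thesis using True by simp
  next
    case False
    then have "real x - 1 \<ge> 1" using a by simp
    then show ?thesis using \<open>real y \<ge> real x - 1\<close>
      by (smt (verit, best) mult_mono)
  qed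
qed

lemma sc_bounds:
  "real (sc (dyck n) dyck_lt 3) \<le> (\<Sum>a\<in>dyck n. real (val a) * (real (val a) + 1) * (real (val a) + 2))"
  "(\<Sum>a\<in>dyck n. real (val a) * (real (val a) - 1) * (real (val a) - 2)) \<le> real (sc (dyck n) dyck_lt 3)"
proof -
  have up: "\<And>a. a \<in> dyck n \<Longrightarrow> real (\<Sum>b\<in>cov n a. \<Sum>c\<in>cov n b. val c) \<le> real (val a) * (real (val a) + 1) * (real (val a) + 2)"
  proof -
    fix a assume a: "a \<in> dyck n"
    have "\<And>b. b \<in> cov n a \<Longrightarrow> real (\<Sum>c\<in>cov n b. val c) \<le> (real (val a) + 1) * (real (val a) + 2)"
    proof -
      fix b assume b: "b \<in> cov n a"
      note bp = cov_props[OF a b]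
      have "real (\<Sum>c\<in>cov n b. val c) = (\<Sum>c\<in>cov n b. real (val c))" by simp
      also have "\<dots> \<le> (\<Sum>c\<in>cov n b. real (val a) + 2)"
        by (intro sum_mono) (use cov_props[OF bp(1)] bp in force)
      also have "\<dots> = real (val b) * (real (val a) + 2)" using card_cov[OF bp(1)] by simp
      also have "\<dots> \<le> (real (val a) + 1) * (real (val a) + 2)" using bp by (intro mult_right_mono) auto
      finally show "real (\<Sum>c\<in>cov n b. val c) \<le> (real (val a) + 1) * (real (val a) + 2)" .
    qed
    then have "(\<Sum>b\<in>cov n a. real (\<Sum>c\<in>cov n b. val c)) \<le> (\<Sum>b\<in>cov n a. (real (val a) + 1) * (real (val a) + 2))"
      by (intro sum_mono) auto
    also have "\<dots> = real (val a) * (real (val a) + 1) * (real (val a) + 2)" using card_cov[OF a] by simp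
    finally show "real (\<Sum>b\<in>cov n a. \<Sum>c\<in>cov n b. val c) \<le> real (val a) * (real (val a) + 1) * (real (val a) + 2)"
      by simp
  qed
  show "real (sc (dyck n) dyck_lt 3) \<le> (\<Sum>a\<in>dyck n. real (val a) * (real (val a) + 1) * (real (val a) + 2))"
    unfolding sc_sum of_nat_sum[of _ "dyck n"] by (intro sum_mono up)
  have lo: "\<And>a. a \<in> dyck n \<Longrightarrow> real (val a) * (real (val a) - 1) * (real (val a) - 2) \<le> real (\<Sum>b\<in>cov n a. \<Sum>c\<in>cov n b. val c)"
  proof -
    fix a assume a: "a \<in> dyck n"
    show "real (val a) * (real (val a) - 1) * (real (val a) - 2) \<le> real (\<Sum>b\<in>cov n a. \<Sum>c\<in>cov n b. val c)"
    proof (cases "val a = 0")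
      case True
      then have "cov n a = {}" using card_cov[OF a] finite_cov[of n a] by simp
      then show ?thesis using True by simp
    next
      case False
      have "\<And>b. b \<in> cov n a \<Longrightarrow> (real (val a) - 1) * (real (val a) - 2) \<le> real (\<Sum>c\<in>cov n b. val c)"
      proof -
        fix b assume b: "b \<in> cov n a"
        note bp = cov_props[OF a b]
        have "real (val b) * (real (val b) - 1) = (\<Sum>c\<in>cov n b. real (val b) - 1)"
          using card_cov[OF bp(1)] by simp
        also have "\<dots> \<le> (\<Sum>c\<in>cov n b. real (val c))"
          by (intro sum_mono) (use cov_props[OF bp(1)] in force)
        finally have "real (val b) * (real (val b) - 1) \<le> real (\<Sum>c\<in>cov n b. val c)" by simp
        moreover have "(real (val a) - 1) * (real (val a) - 2) \<le> real (val b) * (real (val b) - 1)"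
          using lower_aux[of "val a" "val b"] bp False by simp
        ultimately show "(real (val a) - 1) * (real (val a) - 2) \<le> real (\<Sum>c\<in>cov n b. val c)" by simp
      qed
      then have "(\<Sum>b\<in>cov n a. (real (val a) - 1) * (real (val a) - 2)) \<le> (\<Sum>b\<in>cov n a. real (\<Sum>c\<in>cov n b. val c))"
        by (intro sum_mono) auto
      then show ?thesis using card_cov[OF a] by (simp add: mult.assoc)
    qed
  qed
  show "(\<Sum>a\<in>dyck n. real (val a) * (real (val a) - 1) * (real (val a) - 2)) \<le> real (sc (dyck n) dyck_lt 3)"
    unfolding sc_sum of_nat_sum[of _ "dyck n"] by (intro sum_mono lo)
qed




definition W :: "nat \<Rightarrow> bool list set" where
  "W n = {w. length w = 2*n+1 \<and> hsum w = 1}"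

definition cdu :: "bool list \<Rightarrow> nat" where
  "cdu w = card {i. i < length w \<and> \<not> w!i \<and> w!(Suc i mod length w)}"

lemma hsum_rotate[simp]: "hsum (rotate k w) = hsum w"
proof -
  have "hsum (take (k mod length w) w) + hsum (drop (k mod length w) w) = hsum w"
    by (metis append_take_drop_id hsum_append)
  then show ?thesis by (simp add: rotate_drop_take add.commute)
qed

lemma mod_inj_aux: "(i::nat) < L \<Longrightarrow> j < L \<Longrightarrow> (k + i) mod L = (k + j) mod L \<Longrightarrow> i = j"
proof -
  assume a: "i < L" "j < L" "(k + i) mod L = (k + j) mod L"
  then have d: "L dvd nat \<bar>int (k+i) - int (k+j)\<bar>" using mod_eq_iff_dvd_symdiff_nat by blast
  have e: "nat \<bar>int (k+i) - int (k+j)\<bar> < L" using a by auto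
  show "i = j"
  proof (rule ccontr)
    assume "i \<noteq> j"
    then have "nat \<bar>int (k+i) - int (k+j)\<bar> > 0" by auto
    then have "L \<le> nat \<bar>int (k+i) - int (k+j)\<bar>" using d dvd_imp_le by blast
    then show False using e by simp
  qed
qed

lemma mod_bij: "(L::nat) > 0 \<Longrightarrow> bij_betw (\<lambda>i. (k + i) mod L) {..<L} {..<L}"
proof -
  assume L: "L > 0"
  have inj: "inj_on (\<lambda>i. (k + i) mod L) {..<L}"
  proof (rule inj_onI)
    fix i j assume i: "i \<in> {..<L}" and j: "j \<in> {..<L}" and e: "(k + i) mod L = (k + j) mod L"
    then show "i = j" using mod_inj_aux by auto
  qed
  moreover have "(\<lambda>i. (k + i) mod L) ` {..<L} \<subseteq> {..<L}" using L by auto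
  ultimately have "(\<lambda>i. (k + i) mod L) ` {..<L} = {..<L}" using endo_inj_surj by blast
  then show ?thesis using inj by (simp add: bij_betw_def)
qed

lemma card_shift: "(L::nat) > 0 \<Longrightarrow> card {i. i < L \<and> P ((k + i) mod L)} = card {j. j < L \<and> P j}"
proof -
  assume L: "L > 0"
  let ?f = "\<lambda>i. (k + i) mod L"
  have b: "bij_betw ?f {..<L} {..<L}" using mod_bij[OF L] .
  have "bij_betw ?f {i. i < L \<and> P (?f i)} {j. j < L \<and> P j}"
  proof -
    have s: "{i. i < L \<and> P (?f i)} \<subseteq> {..<L}" by auto
    have "?f ` {i. i < L \<and> P (?f i)} = {j. j < L \<and> P j}"
    proof
      show "?f ` {i. i < L \<and> P (?f i)} \<subseteq> {j. j < L \<and> P j}" using L by auto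
      show "{j. j < L \<and> P j} \<subseteq> ?f ` {i. i < L \<and> P (?f i)}"
      proof
        fix j assume j: "j \<in> {j. j < L \<and> P j}"
        then have "j \<in> ?f ` {..<L}" using b unfolding bij_betw_def by auto
        then obtain i where "i < L" "?f i = j" by auto
        then show "j \<in> ?f ` {i. i < L \<and> P (?f i)}" using j by auto
      qed
    qed
    then show ?thesis using bij_betw_subset[OF b s] by (simp add: bij_betw_def)
  qed
  then show ?thesis by (rule bij_betw_same_card)
qed

lemma cdu_rotate[simp]: "cdu (rotate k w) = cdu w"
proof (cases "w = []")
  case True then show ?thesis by simp
next
  case False
  let ?L = "length w"
  have L: "?L > 0" using False by simp
  have "{i. i < ?L \<and> \<not> rotate k w ! i \<and> rotate k w ! (Suc i mod ?L)}
      = {i. i < ?L \<and> (\<lambda>j. \<not> w ! j \<and> w ! (Suc j mod ?L)) ((k + i) mod ?L)}"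
  proof -
    have "\<And>i. i < ?L \<Longrightarrow> (k + Suc i mod ?L) mod ?L = Suc ((k + i) mod ?L) mod ?L"
      by (simp add: mod_Suc_eq mod_add_right_eq)
    then show ?thesis using L by (auto simp: nth_rotate)
  qed
  then show ?thesis unfolding cdu_def using card_shift[OF L] by simp
qed

lemma height_Cons_Suc: "height (b # xs) (Suc q) = (if b then 1 else -1) + height xs q"
  by (simp add: height_hsum)

lemma dyck_last:
  assumes "xs \<in> dyck n" "n \<ge> 1"
  shows "\<not> xs ! (2*n - 1)"
proof
  assume a: "xs ! (2*n - 1)"
  have l: "length xs = 2*n" and h: "height xs (2*n - 1) \<ge> 0" "height xs (2*n) = 0"
    using assms by (auto simp: dyck_def)
  have "height xs (Suc (2*n-1)) = height xs (2*n-1) + 1" using height_Suc[of "2*n-1" xs] l a assms(2) by simp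
  moreover have "Suc (2*n-1) = 2*n" using assms(2) by simp
  ultimately show False using h by simp
qed

lemma cdu_Cons:
  assumes "xs \<in> dyck n" "n \<ge> 1"
  shows "cdu (True # xs) = val xs + 1"
proof -
  have l: "length xs = 2*n" using assms by (simp add: dyck_def)
  let ?w = "True # xs"
  have "{i. i < length ?w \<and> \<not> ?w!i \<and> ?w!(Suc i mod length ?w)} = insert (2*n) (Suc ` valleys xs)"
  proof (intro set_eqI iffI)
    fix i assume i: "i \<in> {i. i < length ?w \<and> \<not> ?w!i \<and> ?w!(Suc i mod length ?w)}"
    then have i1: "i < 2*n+1" "\<not> ?w ! i" "?w!(Suc i mod (2*n+1))" using l by auto
    then obtain j where j: "i = Suc j" by (cases i) auto
    show "i \<in> insert (2*n) (Suc ` valleys xs)"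
    proof (cases "i = 2*n")
      case True then show ?thesis by simp
    next
      case False
      then have "Suc i < 2*n+1" using i1 by simp
      then have "Suc j < length xs" "\<not> xs!j" "xs!(Suc j)" using i1 j l by auto
      then show ?thesis using j by (auto simp: valleys_def)
    qed
  next
    fix i assume "i \<in> insert (2*n) (Suc ` valleys xs)"
    then show "i \<in> {i. i < length ?w \<and> \<not> ?w!i \<and> ?w!(Suc i mod length ?w)}"
    proof
      assume "i = 2*n"
      moreover have "Suc (2*n) mod (2*n+1) = 0" by simp
      moreover have "?w ! (2*n) = xs ! (2*n - 1)" using assms(2) by (cases n) auto
      ultimately show ?thesis using dyck_last[OF assms] l by simp
    next
      assume "i \<in> Suc ` valleys xs"
      then obtain j where "i = Suc j" "Suc j < length xs" "\<not> xs!j" "xs!(Suc j)" by (auto simp: valleys_def)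
      then show ?thesis using l by auto
    qed
  qed
  moreover have "2*n \<notin> Suc ` valleys xs" using l by (auto simp: valleys_def)
  ultimately show ?thesis unfolding cdu_def val_def
    by (simp add: card_image)
qed




lemma hsum_take_drop: "hsum (take j u) + hsum (drop j u) = hsum u"
  by (metis append_take_drop_id hsum_append)

lemma hsum_dyck: "xs \<in> dyck n \<Longrightarrow> hsum xs = 0"
proof -
  assume a: "xs \<in> dyck n"
  then have "take (2*n) xs = xs" "height xs (2*n) = 0" by (auto simp: dyck_def)
  then show ?thesis by (simp add: height_hsum)
qed

lemma height_Cons_pos:
  assumes "xs \<in> dyck n" "1 \<le> p" "p \<le> 2*n+1"
  shows "height (True # xs) p \<ge> 1"
proof -
  obtain q where q: "p = Suc q" using assms(2) by (cases p) auto
  have "height xs q \<ge> 0" using assms q by (auto simp: dyck_def)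
  then show ?thesis using q height_Cons_Suc by simp
qed

lemma rot_unique:
  assumes g: "g \<in> dyck n" and g': "g' \<in> dyck n" and e: "rotate j (True # g) = True # g'" and j: "j < 2*n+1"
  shows "j = 0"
proof (rule ccontr)
  assume j0: "j \<noteq> 0"
  let ?u = "True # g"
  have lu: "length ?u = 2*n+1" using g by (simp add: dyck_def)
  have r: "rotate j ?u = drop j ?u @ take j ?u" using rotate_drop_take[of j ?u] lu j by simp
  let ?p = "2*n+1 - j"
  have "take ?p (rotate j ?u) = drop j ?u" using r lu by simp
  then have hp: "height (True # g') ?p = hsum (drop j ?u)" using e by (simp add: height_hsum)
  have "height (True # g') ?p \<ge> 1" using height_Cons_pos[OF g', of ?p] j j0 by simp
  moreover have "hsum (drop j ?u) = 1 - height ?u j"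
    using hsum_take_drop[of j ?u] hsum_dyck[OF g] by (simp add: height_hsum)
  moreover have "height ?u j \<ge> 1" using height_Cons_pos[OF g, of j] j j0 by simp
  ultimately show False using hp by simp
qed

lemma rot_surj:
  assumes w: "w \<in> W n"
  shows "\<exists>g\<in>dyck n. \<exists>k<2*n+1. rotate k (True # g) = w"
proof -
  let ?L = "2*n+1"
  let ?H = "height w"
  have lw: "length w = ?L" and hw: "hsum w = 1" using w by (auto simp: W_def)
  define M where "M = Min (?H ` {..<?L})"
  have Mle: "\<And>k. k < ?L \<Longrightarrow> M \<le> ?H k" unfolding M_def by simp
  have "M \<in> ?H ` {..<?L}" unfolding M_def by (intro Min_in) auto
  then obtain k0 where k0: "k0 < ?L" "?H k0 = M" by auto
  define j where "j = Max {k. k < ?L \<and> ?H k = M}"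
  have fin: "finite {k. k < ?L \<and> ?H k = M}" by simp
  have jin: "j \<in> {k. k < ?L \<and> ?H k = M}" unfolding j_def using k0 fin by (intro Max_in) auto
  then have jL: "j < ?L" and hj: "?H j = M" by auto
  have jmax: "\<And>k. j < k \<Longrightarrow> k < ?L \<Longrightarrow> ?H j < ?H k"
  proof -
    fix k assume a: "j < k" "k < ?L"
    have "?H k \<noteq> M"
    proof
      assume "?H k = M"
      then have "k \<le> j" unfolding j_def using a fin by (intro Max_ge) auto
      then show False using a by simp
    qed
    then show "?H j < ?H k" using Mle[of k] a hj by simp
  qed
  have hj0: "?H j \<le> 0" using Mle[of 0] hj by simp
  define u where "u = rotate j w"
  have u: "u = drop j w @ take j w" unfolding u_def using rotate_drop_take[of j w] lw jL by simp
  have lu: "length u = ?L" unfolding u_def using lw by simp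
  have hd: "hsum (drop j w) = 1 - ?H j" using hsum_take_drop[of j w] hw by (simp add: height_hsum)
  have pos: "\<And>p. 1 \<le> p \<Longrightarrow> p \<le> ?L \<Longrightarrow> height u p \<ge> 1"
  proof -
    fix p assume p: "1 \<le> p" "p \<le> ?L"
    show "height u p \<ge> 1"
    proof (cases "p \<le> ?L - j")
      case True
      then have "take p u = take p (drop j w)" using u lw by simp
      moreover have "take (j+p) w = take j w @ take p (drop j w)" by (simp add: take_add)
      ultimately have hu: "height u p = ?H (j+p) - ?H j" by (simp add: height_hsum)
      show ?thesis
      proof (cases "p = ?L - j")
        case True
        then have "j + p = ?L" using jL by simp
        then have "?H (j+p) = 1" using hw lw by (simp add: height_hsum)
        then show ?thesis using hu hj0 by simp
      next
        case False
        then have "j + p < ?L" "j < j + p" using True p by auto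
        then show ?thesis using hu jmax[of "j+p"] by simp
      qed
    next
      case False
      define q where "q = p - (?L - j)"
      have q: "q \<le> j" using False p jL unfolding q_def by simp
      have "take p u = drop j w @ take q (take j w)" using u lw False unfolding q_def by (simp add: take_append)
      also have "\<dots> = drop j w @ take q w" using q by (simp add: min_def)
      finally have "height u p = 1 - ?H j + ?H q" using hd by (simp add: height_hsum)
      moreover have "?H j \<le> ?H q" using Mle[of q] hj q jL by simp
      ultimately show ?thesis by simp
    qed
  qed
  obtain x g where ux: "u = x # g" using lu by (cases u) auto
  have "height u 1 \<ge> 1" using pos[of 1] by simp
  then have x: "x" using ux by (auto simp: height_hsum split: if_splits)
  have lg: "length g = 2*n" using lu ux by simp
  have g: "g \<in> dyck n"
    unfolding dyck_def
  proof (intro CollectI conjI allI impI)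
    show "length g = 2*n" by fact
    fix q assume "q \<le> 2*n"
    then have "height u (Suc q) \<ge> 1" using pos[of "Suc q"] by simp
    then show "0 \<le> height g q" using ux x height_Cons_Suc by simp
  next
    have "height u ?L = 1" using lu hw unfolding u_def by (simp add: height_hsum)
    then show "height g (2*n) = 0" using ux x height_Cons_Suc[of x g "2*n"] by simp
  qed
  define k where "k = (?L - j) mod ?L"
  have "rotate k (True # g) = rotate k (rotate j w)" using ux x u_def by simp
  also have "\<dots> = rotate (k + j) w" by (simp add: rotate_rotate)
  also have "\<dots> = w"
  proof (rule rotate_id)
    have "(k + j) mod ?L = ((?L - j) + j) mod ?L" unfolding k_def by (simp add: mod_add_left_eq)
    also have "\<dots> = 0" using jL by simp
    finally show "(k + j) mod length w = 0" using lw by simp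
  qed
  finally have "rotate k (True # g) = w" .
  moreover have "k < ?L" unfolding k_def by simp
  ultimately show ?thesis using g by blast
qed

lemma rot_diff:
  assumes "rotate a u = rotate b u'" "length u = L" "length u' = L" "b \<le> a" "a < L"
  shows "rotate (a - b) u = u'"
proof -
  have "rotate (L - b) (rotate a u) = rotate (L - b) (rotate b u')" using assms by simp
  moreover have "rotate (L - b) (rotate b u') = u'"
    using assms by (simp add: rotate_rotate)
  moreover have "rotate (L - b) (rotate a u) = rotate (a - b) u"
  proof -
    have e: "L - b + a = (a - b) + L" using assms by simp
    have m: "(L - b + a) mod L = a - b"
    proof -
      have "(L - b + a) mod L = ((a - b) + L) mod L" by (simp only: e)
      also have "\<dots> = (a - b) mod L" by (rule mod_add_self2)
      also have "\<dots> = a - b" using assms by simp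
      finally show ?thesis .
    qed
    have "rotate (L - b) (rotate a u) = rotate (L - b + a) u" by (simp add: rotate_rotate)
    also have "\<dots> = rotate ((L - b + a) mod L) u" using assms(2) by (metis rotate_conv_mod)
    also have "\<dots> = rotate (a - b) u" using m by simp
    finally show ?thesis .
  qed
  ultimately show ?thesis by simp
qed

lemma Phi_bij:
  "bij_betw (\<lambda>(g,k). rotate k (True # g)) (dyck n \<times> {..<2*n+1}) (W n)"
proof -
  let ?L = "2*n+1"
  let ?F = "\<lambda>(g,k). rotate k (True # g)"
  have inj: "inj_on ?F (dyck n \<times> {..<?L})"
  proof (rule inj_onI)
    fix x y assume x: "x \<in> dyck n \<times> {..<?L}" and y: "y \<in> dyck n \<times> {..<?L}" and e: "?F x = ?F y"
    obtain g k where gk: "x = (g,k)" by (cases x)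
    obtain g' k' where gk': "y = (g',k')" by (cases y)
    have g: "g \<in> dyck n" "k < ?L" and g': "g' \<in> dyck n" "k' < ?L" using x y gk gk' by auto
    have l: "length (True # g) = ?L" "length (True # g') = ?L" using g g' by (auto simp: dyck_def)
    have e': "rotate k (True # g) = rotate k' (True # g')" using e gk gk' by simp
    have "k = k'"
    proof (cases "k' \<le> k")
      case True
      then have "rotate (k - k') (True # g) = True # g'" using rot_diff[OF e' l] g by simp
      moreover have "k - k' < ?L" using g by simp
      ultimately have "k - k' = 0" using rot_unique[OF g(1) g'(1)] by blast
      then show ?thesis using True by simp
    next
      case False
      then have "rotate (k' - k) (True # g') = True # g" using rot_diff[OF e'[symmetric] l(2) l(1)] g' by simp
      moreover have "k' - k < ?L" using g' by simp
      ultimately have "k' - k = 0" using rot_unique[OF g'(1) g(1)] by blast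
      then show ?thesis using False by simp
    qed
    then have "rotate k (True # g) = rotate k (True # g')" using e' by simp
    then have "rotate (k - k) (True # g) = True # g'" using rot_diff l g by blast
    then have "g = g'" by simp
    then show "x = y" using gk gk' \<open>k = k'\<close> by simp
  qed
  have "?F ` (dyck n \<times> {..<?L}) = W n"
  proof
    show "?F ` (dyck n \<times> {..<?L}) \<subseteq> W n"
      by (auto simp: W_def dyck_def height_hsum)
    show "W n \<subseteq> ?F ` (dyck n \<times> {..<?L})"
    proof
      fix w assume "w \<in> W n"
      then obtain g k where "g \<in> dyck n" "k < ?L" "rotate k (True # g) = w" using rot_surj by blast
      then show "w \<in> ?F ` (dyck n \<times> {..<?L})" by force
    qed
  qed
  then show ?thesis using inj by (simp add: bij_betw_def)
qed

lemma transfer: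
  fixes f :: "nat \<Rightarrow> real"
  assumes n: "n \<ge> 1"
  shows "(\<Sum>w\<in>W n. f (cdu w)) = real (2*n+1) * (\<Sum>g\<in>dyck n. f (val g + 1))"
proof -
  let ?L = "2*n+1"
  have "(\<Sum>w\<in>W n. f (cdu w)) = (\<Sum>x\<in>dyck n \<times> {..<?L}. f (cdu ((\<lambda>(g,k). rotate k (True # g)) x)))"
    using sum.reindex_bij_betw[OF Phi_bij, of "\<lambda>w. f (cdu w)"] by simp
  also have "\<dots> = (\<Sum>(g,k)\<in>dyck n \<times> {..<?L}. f (val g + 1))"
    by (intro sum.cong refl) (auto simp: cdu_Cons[OF _ n])
  also have "\<dots> = (\<Sum>g\<in>dyck n. \<Sum>k<?L. f (val g + 1))"
    by (rule sum.cartesian_product[symmetric])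
  also have "\<dots> = real ?L * (\<Sum>g\<in>dyck n. f (val g + 1))"
    by (simp add: sum_distrib_left)
  finally show ?thesis .
qed




definition psi :: "bool list \<Rightarrow> nat set" where
  "psi w = {i. i < length w \<and> w!i}"

definition Sub :: "nat \<Rightarrow> nat set set" where
  "Sub n = {S. S \<subseteq> {..<2*n+1} \<and> card S = n+1}"

definition cduS :: "nat \<Rightarrow> nat set \<Rightarrow> nat" where
  "cduS L S = card {i. i < L \<and> i \<notin> S \<and> Suc i mod L \<in> S}"

lemma hsum_filter: "hsum w = 2 * int (length (filter id w)) - int (length w)"
  by (induction w) auto

lemma hsum_card: "hsum w = 2 * int (card (psi w)) - int (length w)"
  using hsum_filter[of w] length_filter_conv_card[of id w] by (simp add: psi_def)

lemma psi_bij: "bij_betw psi (W n) (Sub n)"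
proof -
  let ?L = "2*n+1"
  let ?g = "\<lambda>S. map (\<lambda>i. i \<in> S) [0..<?L]"
  show ?thesis
  proof (rule bij_betw_byWitness[where f' = ?g])
    show "\<forall>w\<in>W n. ?g (psi w) = w"
    proof
      fix w assume "w \<in> W n"
      then have l: "length w = ?L" by (simp add: W_def)
      show "?g (psi w) = w" by (rule nth_equalityI) (simp_all add: l psi_def del: upt_Suc)
    qed
    show "\<forall>S\<in>Sub n. psi (?g S) = S"
    proof
      fix S assume "S \<in> Sub n"
      then have "S \<subseteq> {..<?L}" by (simp add: Sub_def)
      then show "psi (?g S) = S" by (auto simp: psi_def simp del: upt_Suc)
    qed
    show "psi ` W n \<subseteq> Sub n"
    proof
      fix S assume "S \<in> psi ` W n"
      then obtain w where w: "w \<in> W n" "S = psi w" by auto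
      then have "length w = ?L" "hsum w = 1" by (auto simp: W_def)
      then have "card (psi w) = n+1" using hsum_card[of w] by simp
      moreover have "psi w \<subseteq> {..<?L}" using \<open>length w = ?L\<close> by (auto simp: psi_def)
      ultimately show "S \<in> Sub n" using w by (simp add: Sub_def)
    qed
    show "?g ` Sub n \<subseteq> W n"
    proof
      fix w assume "w \<in> ?g ` Sub n"
      then obtain S where S: "S \<in> Sub n" "w = ?g S" by auto
      then have "S \<subseteq> {..<?L}" "card S = n+1" by (auto simp: Sub_def)
      moreover have "psi w = S" using S \<open>S \<subseteq> {..<?L}\<close> by (auto simp: psi_def simp del: upt_Suc)
      moreover have "length w = ?L" using S by simp
      ultimately show "w \<in> W n" using hsum_card[of w] by (simp add: W_def)
    qed
  qed
qed

lemma cdu_psi: "w \<in> W n \<Longrightarrow> cdu w = cduS (2*n+1) (psi w)"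
  unfolding cdu_def cduS_def psi_def W_def by (intro arg_cong[where f=card]) auto

lemma sum_W_Sub: "(\<Sum>w\<in>W n. f (cdu w)) = (\<Sum>S\<in>Sub n. f (cduS (2*n+1) S))"
proof -
  have "(\<Sum>S\<in>Sub n. f (cduS (2*n+1) S)) = (\<Sum>w\<in>W n. f (cduS (2*n+1) (psi w)))"
    using sum.reindex_bij_betw[OF psi_bij, of "\<lambda>S. f (cduS (2*n+1) S)"] by simp
  also have "\<dots> = (\<Sum>w\<in>W n. f (cdu w))" by (intro sum.cong refl) (simp add: cdu_psi)
  finally show ?thesis by simp
qed

lemma count_sub:
  assumes U: "finite U" and X: "X \<subseteq> U" and Y: "Y \<subseteq> U" and XY: "X \<inter> Y = {}" and k: "card X \<le> k"
  shows "card {S. S \<subseteq> U \<and> card S = k \<and> X \<subseteq> S \<and> S \<inter> Y = {}} = (card U - card X - card Y) choose (k - card X)"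
proof -
  have fX: "finite X" using U X finite_subset by blast
  have fY: "finite Y" using U Y finite_subset by blast
  let ?A = "{S. S \<subseteq> U \<and> card S = k \<and> X \<subseteq> S \<and> S \<inter> Y = {}}"
  let ?B = "{T. T \<subseteq> U - X - Y \<and> card T = k - card X}"
  have "bij_betw (\<lambda>S. S - X) ?A ?B"
  proof (rule bij_betw_byWitness[where f' = "\<lambda>T. T \<union> X"])
    show "\<forall>S\<in>?A. S - X \<union> X = S" by auto
    show "\<forall>T\<in>?B. T \<union> X - X = T" by auto
    show "(\<lambda>S. S - X) ` ?A \<subseteq> ?B"
    proof
      fix T assume "T \<in> (\<lambda>S. S - X) ` ?A"
      then obtain S where S: "S \<in> ?A" "T = S - X" by auto
      then have "finite S" using U finite_subset by blast
      then have "card (S - X) = card S - card X" using S by (simp add: card_Diff_subset fX)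
      then show "T \<in> ?B" using S by auto
    qed
    show "(\<lambda>T. T \<union> X) ` ?B \<subseteq> ?A"
    proof
      fix S assume "S \<in> (\<lambda>T. T \<union> X) ` ?B"
      then obtain T where T: "T \<in> ?B" "S = T \<union> X" by auto
      then have fT: "finite T" using U finite_subset by blast
      have "T \<inter> X = {}" using T by auto
      then have "card S = card T + card X" using T fT fX by (simp add: card_Un_disjoint)
      then show "S \<in> ?A" using T k X XY by auto
    qed
  qed
  then have "card ?A = card ?B" by (rule bij_betw_same_card)
  also have "\<dots> = card (U - X - Y) choose (k - card X)"
    using n_subsets[of "U - X - Y" "k - card X"] U by simp
  also have "card (U - X - Y) = card U - card X - card Y"
  proof -
    have "card (U - X) = card U - card X" using X U by (simp add: card_Diff_subset fX)
    moreover have "Y \<subseteq> U - X" using Y XY by auto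
    ultimately show ?thesis using fY by (simp add: card_Diff_subset)
  qed
  finally show ?thesis .
qed




definition ind :: "nat \<Rightarrow> nat \<Rightarrow> nat set \<Rightarrow> bool" where
  "ind L i S \<longleftrightarrow> i \<notin> S \<and> Suc i mod L \<in> S"

lemma finite_Sub: "finite (Sub n)"
  by (rule finite_subset[of _ "Pow {..<2*n+1}"]) (auto simp: Sub_def)

lemma card_Sub: "card (Sub n) = (2*n+1) choose (n+1)"
  using n_subsets[of "{..<2*n+1}" "n+1"] by (simp add: Sub_def)

lemma real_card_filter: "finite A \<Longrightarrow> real (card {x\<in>A. P x}) = (\<Sum>x\<in>A. if P x then 1 else 0)"
  by (simp add: sum.inter_filter[symmetric])

lemma cduS_sum: "real (cduS L S) = (\<Sum>i<L. if ind L i S then 1 else 0)"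
proof -
  have "{i. i < L \<and> i \<notin> S \<and> Suc i mod L \<in> S} = {i\<in>{..<L}. ind L i S}" by (auto simp: ind_def)
  then show ?thesis unfolding cduS_def using real_card_filter[of "{..<L}" "\<lambda>i. ind L i S"] by simp
qed

lemma Suc_mod_ne: "(L::nat) \<ge> 2 \<Longrightarrow> i < L \<Longrightarrow> Suc i mod L \<noteq> i"
proof (cases "Suc i < L")
  case True then show ?thesis by simp
next
  case False
  assume "L \<ge> 2" "i < L"
  then have "Suc i = L" using False by simp
  then show ?thesis using \<open>L \<ge> 2\<close> by simp
qed

lemma count_one:
  assumes n: "n \<ge> 1" and i: "i < 2*n+1"
  shows "card {S\<in>Sub n. ind (2*n+1) i S} = (2*n-1) choose n"
proof -
  let ?L = "2*n+1"
  let ?i' = "Suc i mod ?L"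
  have ne: "?i' \<noteq> i" using Suc_mod_ne[of ?L i] n i by simp
  have "{S\<in>Sub n. ind ?L i S} = {S. S \<subseteq> {..<?L} \<and> card S = n+1 \<and> {?i'} \<subseteq> S \<and> S \<inter> {i} = {}}"
    by (auto simp: Sub_def ind_def)
  also have "card \<dots> = (card {..<?L} - card {?i'} - card {i}) choose (n + 1 - card {?i'})"
    by (rule count_sub) (use i ne in auto)
  also have "\<dots> = (2*n-1) choose n" by simp
  finally show ?thesis .
qed

lemma count_two:
  assumes n: "n \<ge> 2" and i: "i < 2*n+1" and j: "j < 2*n+1" and ij: "i \<noteq> j"
    and a: "j \<noteq> Suc i mod (2*n+1)" and b: "i \<noteq> Suc j mod (2*n+1)"
  shows "card {S\<in>Sub n. ind (2*n+1) i S \<and> ind (2*n+1) j S} = (2*n-3) choose (n-1)"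
proof -
  let ?L = "2*n+1"
  let ?i' = "Suc i mod ?L"
  let ?j' = "Suc j mod ?L"
  have ne: "?i' \<noteq> ?j'"
  proof
    assume "?i' = ?j'"
    then have "(1+i) mod ?L = (1+j) mod ?L" by simp
    then show False using mod_inj_aux[of i ?L j 1] i j ij by blast
  qed
  have ne2: "?i' \<noteq> i" "?j' \<noteq> j" using Suc_mod_ne[of ?L i] Suc_mod_ne[of ?L j] n i j by auto
  have "{S\<in>Sub n. ind ?L i S \<and> ind ?L j S} = {S. S \<subseteq> {..<?L} \<and> card S = n+1 \<and> {?i', ?j'} \<subseteq> S \<and> S \<inter> {i, j} = {}}"
    by (auto simp: Sub_def ind_def)
  also have "card \<dots> = (card {..<?L} - card {?i', ?j'} - card {i, j}) choose (n + 1 - card {?i', ?j'})"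
    by (rule count_sub) (use i j ne ne2 a b ij n in auto)
  also have "\<dots> = (2*n-3) choose (n-1)" using ne ij by (simp add: numeral_3_eq_3)
  finally show ?thesis .
qed

lemma count_zero:
  assumes "j = Suc i mod L \<or> i = Suc j mod L"
  shows "{S\<in>Sub n. ind L i S \<and> ind L j S} = {}"
  using assms by (auto simp: ind_def)

lemma sum_S1:
  assumes n: "n \<ge> 1"
  shows "(\<Sum>S\<in>Sub n. real (cduS (2*n+1) S)) = real (2*n+1) * real ((2*n-1) choose n)"
proof -
  let ?L = "2*n+1"
  have "(\<Sum>S\<in>Sub n. real (cduS ?L S)) = (\<Sum>S\<in>Sub n. \<Sum>i<?L. if ind ?L i S then 1 else 0)"
    by (simp add: cduS_sum)
  also have "\<dots> = (\<Sum>i<?L. \<Sum>S\<in>Sub n. if ind ?L i S then 1 else 0)" by (rule sum.swap)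
  also have "\<dots> = (\<Sum>i<?L. real (card {S\<in>Sub n. ind ?L i S}))"
    by (simp add: real_card_filter finite_Sub)
  also have "\<dots> = (\<Sum>i<?L. real ((2*n-1) choose n))"
  proof (intro sum.cong refl)
    fix i assume "i \<in> {..<?L}"
    then show "real (card {S\<in>Sub n. ind ?L i S}) = real ((2*n-1) choose n)" using count_one[OF n, of i] by simp
  qed
  finally show ?thesis by simp
qed

lemma sum_S2:
  assumes n: "n \<ge> 2"
  shows "(\<Sum>S\<in>Sub n. real (cduS (2*n+1) S)^2)
     = real (2*n+1) * (real ((2*n-1) choose n) + (real (2*n+1) - 3) * real ((2*n-3) choose (n-1)))"
proof -
  let ?L = "2*n+1"
  let ?A = "real ((2*n-1) choose n)"
  let ?B = "real ((2*n-3) choose (n-1))"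
  have "(\<Sum>S\<in>Sub n. real (cduS ?L S)^2) = (\<Sum>S\<in>Sub n. \<Sum>i<?L. \<Sum>j<?L. if ind ?L i S \<and> ind ?L j S then 1 else 0)"
  proof (intro sum.cong refl)
    fix S
    have "real (cduS ?L S)^2 = (\<Sum>i<?L. if ind ?L i S then 1 else 0) * (\<Sum>j<?L. if ind ?L j S then (1::real) else 0)"
      by (simp add: cduS_sum power2_eq_square)
    also have "\<dots> = (\<Sum>i<?L. \<Sum>j<?L. (if ind ?L i S then 1 else 0) * (if ind ?L j S then (1::real) else 0))"
      by (rule sum_product)
    also have "\<dots> = (\<Sum>i<?L. \<Sum>j<?L. if ind ?L i S \<and> ind ?L j S then 1 else 0)"
      by (intro sum.cong refl) auto
    finally show "real (cduS ?L S)^2 = (\<Sum>i<?L. \<Sum>j<?L. if ind ?L i S \<and> ind ?L j S then 1 else 0)" .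
  qed
  also have "\<dots> = (\<Sum>i<?L. \<Sum>S\<in>Sub n. \<Sum>j<?L. if ind ?L i S \<and> ind ?L j S then 1 else 0)" by (rule sum.swap)
  also have "\<dots> = (\<Sum>i<?L. \<Sum>j<?L. \<Sum>S\<in>Sub n. if ind ?L i S \<and> ind ?L j S then 1 else 0)"
    by (intro sum.cong refl sum.swap)
  also have "\<dots> = (\<Sum>i<?L. \<Sum>j<?L. real (card {S\<in>Sub n. ind ?L i S \<and> ind ?L j S}))"
    by (simp add: real_card_filter finite_Sub)
  also have "\<dots> = (\<Sum>i<?L. ?A + (real ?L - 3) * ?B)"
  proof (intro sum.cong refl)
    fix i assume "i \<in> {..<?L}"
    then have i: "i < ?L" by simp
    define i' where "i' = Suc i mod ?L"
    define i'' where "i'' = (i + (?L - 1)) mod ?L"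
    have i'L: "i' < ?L" "i'' < ?L" unfolding i'_def i''_def by auto
    have d1: "i' \<noteq> i" using Suc_mod_ne[of ?L i] n i unfolding i'_def by simp
    have si'': "Suc i'' mod ?L = i"
    proof -
      have e1: "Suc i'' mod ?L = (i + ?L) mod ?L" unfolding i''_def by (simp add: mod_Suc_eq)
      have e2: "(i + ?L) mod ?L = i" using i by (simp only: mod_add_self2 mod_less)
      from e1 e2 show ?thesis by (rule trans)
    qed
    have d2: "i'' \<noteq> i" using Suc_mod_ne[of ?L i''] n i'L si'' by auto
    have d3: "i' \<noteq> i''"
    proof
      assume "i' = i''"
      then have "(i + 1) mod ?L = (i + (?L - 1)) mod ?L" unfolding i'_def i''_def by simp
      then have "1 = ?L - 1" using mod_inj_aux[of 1 ?L "?L - 1" i] n by simp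
      then show False using n by simp
    qed
    have jeq: "\<And>j. j < ?L \<Longrightarrow> i = Suc j mod ?L \<longleftrightarrow> j = i''"
    proof -
      fix j assume j: "j < ?L"
      show "i = Suc j mod ?L \<longleftrightarrow> j = i''"
      proof
        assume "i = Suc j mod ?L"
        then have "(1 + j) mod ?L = (1 + i'') mod ?L" using si'' by simp
        then show "j = i''" using mod_inj_aux[of j ?L i'' 1] j i'L by simp
      next
        assume "j = i''" then show "i = Suc j mod ?L" using si'' by simp
      qed
    qed
    have f: "\<And>j. j \<in> {..<?L} \<Longrightarrow> real (card {S\<in>Sub n. ind ?L i S \<and> ind ?L j S})
      = ?B + (if j = i then ?A - ?B else 0) + (if j = i' then - ?B else 0) + (if j = i'' then - ?B else 0)"
    proof -
      fix j assume "j \<in> {..<?L}"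
      then have j: "j < ?L" by simp
      show "real (card {S\<in>Sub n. ind ?L i S \<and> ind ?L j S})
        = ?B + (if j = i then ?A - ?B else 0) + (if j = i' then - ?B else 0) + (if j = i'' then - ?B else 0)"
      proof (cases "j = i")
        case True
        then show ?thesis using count_one[of n i] n i d1 d2 by simp
      next
        case False
        show ?thesis
        proof (cases "j = i' \<or> j = i''")
          case True
          then have "j = Suc i mod ?L \<or> i = Suc j mod ?L" using jeq[OF j] unfolding i'_def by auto
          then have e: "{S\<in>Sub n. ind ?L i S \<and> ind ?L j S} = {}" using count_zero[of j i ?L n] by blast
          have c0: "real (card {S\<in>Sub n. ind ?L i S \<and> ind ?L j S}) = 0" by (subst e) simp
          have r: "?B + (if j = i then ?A - ?B else 0) + (if j = i' then - ?B else 0) + (if j = i'' then - ?B else 0) = 0"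
            using True False d3 by (cases "j = i'") auto
          show ?thesis by (simp only: c0 r)
        next
          case F: False
          then have "j \<noteq> Suc i mod ?L" "i \<noteq> Suc j mod ?L" using jeq[OF j] unfolding i'_def by auto
          then show ?thesis using count_two[OF n i j] False F by simp
        qed
      qed
    qed
    have "(\<Sum>j<?L. real (card {S\<in>Sub n. ind ?L i S \<and> ind ?L j S}))
      = (\<Sum>j<?L. ?B + (if j = i then ?A - ?B else 0) + (if j = i' then - ?B else 0) + (if j = i'' then - ?B else 0))"
      by (rule sum.cong[OF refl f])
    also have "\<dots> = real ?L * ?B + (?A - ?B) - ?B - ?B"
    proof -
      have "(\<Sum>j<?L. ?B + (if j = i then ?A - ?B else 0) + (if j = i' then - ?B else 0) + (if j = i'' then - ?B else 0))
        = (\<Sum>j<?L. ?B) + (\<Sum>j<?L. if j = i then ?A - ?B else 0) + (\<Sum>j<?L. if j = i' then - ?B else 0) + (\<Sum>j<?L. if j = i'' then - ?B else 0)"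
        by (simp only: sum.distrib)
      also have "\<dots> = real ?L * ?B + (?A - ?B) + (- ?B) + (- ?B)"
        using i i'L by (simp only: sum.delta finite_lessThan lessThan_iff if_True sum_constant card_lessThan)
      finally show ?thesis by simp
    qed
    also have "\<dots> = ?A + (real ?L - 3) * ?B" by (simp add: algebra_simps)
    finally show "(\<Sum>j<?L. real (card {S\<in>Sub n. ind ?L i S \<and> ind ?L j S})) = ?A + (real ?L - 3) * ?B" .
  qed
  also have "\<dots> = real ?L * (?A + (real ?L - 3) * ?B)" by simp
  finally show ?thesis .
qed




lemma binom_step: "((2*j+3) choose (j+2)) * ((j+2)*(j+1)) = ((2*j+1) choose (j+1)) * ((2*j+3)*(2*j+2))"
proof -
  have a: "(j+2) * ((2*j+3) choose (j+2)) = (2*j+3) * ((2*j+2) choose (j+1))"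
    using Suc_times_binomial[of "j+1" "2*j+2"] by (simp add: numeral_eq_Suc)
  have b: "(j+1) * ((2*j+2) choose (j+1)) = (2*j+2) * ((2*j+1) choose j)"
    using Suc_times_binomial[of "j" "2*j+1"] by (simp add: numeral_eq_Suc)
  have c: "(2*j+1) choose j = (2*j+1) choose (j+1)"
    using binomial_symmetric[of j "2*j+1"] by simp
  have "((2*j+3) choose (j+2)) * ((j+2)*(j+1)) = ((j+2) * ((2*j+3) choose (j+2))) * (j+1)" by (simp add: algebra_simps)
  also have "\<dots> = (2*j+3) * ((j+1) * ((2*j+2) choose (j+1)))" using a by (simp add: algebra_simps)
  also have "\<dots> = (2*j+3) * ((2*j+2) * ((2*j+1) choose (j+1)))" using b c by simp
  finally show ?thesis by (simp add: algebra_simps)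
qed

lemma binom_step': "a = 2*j+3 \<Longrightarrow> b = j+2 \<Longrightarrow> c = j+1 \<Longrightarrow> d = 2*j+1 \<Longrightarrow> e = 2*j+2 \<Longrightarrow>
   (a choose b) * (b*c) = (d choose c) * (a*e)"
  using binom_step[of j] by simp
lemma b1: assumes j: "n = j + 2"
  shows "((2*n+1) choose (n+1)) * ((n+1)*n) = ((2*n-1) choose n) * ((2*n+1)*(2*n))"
  by (rule binom_step'[of _ "j+1"]) (use j in auto)
lemma b2: assumes j: "n = j + 2"
  shows "((2*n-1) choose n) * (n*(n-1)) = ((2*n-3) choose (n-1)) * ((2*n-1)*(2*n-2))"
  by (rule binom_step'[of _ "j"]) (use j in auto)

lemma alg:
  fixes x A B N S1 S2 :: real
  assumes x: "x \<ge> 2" and A: "A > 0" and h0: "N * (x+1) = 2*A" and h1: "S1 + N = A"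
    and h2: "S2 + 2*S1 + N = A + (2*x-2)*B" and h3: "A*(x*(x-1)) = B*((2*x-1)*(2*x-2))"
  shows "N > 0" "S1 / N = (x - 1) / 2"
    "S2 / N = (x + 1) / 2 + (x + 1) * x * (x - 1) / (2 * (2 * x - 1)) - x"
proof -
  have xp: "x + 1 > 0" using x by simp
  have NA: "N = 2*A/(x+1)" using h0 xp by (simp add: field_simps)
  show Np: "N > 0" using NA A xp by simp
  have AN: "A = N*(x+1)/2" using h0 by simp
  have S1e: "S1 = N*(x-1)/2" using h1 AN by (simp add: algebra_simps)
  show "S1 / N = (x - 1) / 2" using S1e Np by simp
  have d: "(2*x-1)*(2*x-2) \<noteq> 0" using x by simp
  have Be: "(2*x-2)*B = A*x*(x-1)/(2*x-1)"
  proof -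
    have "(2*x-2)*B*(2*x-1) = A*x*(x-1)" using h3 by (simp add: algebra_simps)
    then show ?thesis using x by (simp add: field_simps)
  qed
  have Ae: "A*x*(x-1)/(2*x-1) = N*(x+1)*x*(x-1)/(2*(2*x-1))"
  proof -
    have "A*x*(x-1)/(2*x-1) = (N*(x+1)/2)*x*(x-1)/(2*x-1)" by (simp only: AN)
    also have "\<dots> = N*(x+1)*x*(x-1)/(2*(2*x-1))" by simp
    finally show ?thesis .
  qed
  have "S2 = A + (2*x-2)*B - 2*S1 - N" using h2 by simp
  also have "\<dots> = A + A*x*(x-1)/(2*x-1) - 2*S1 - N" using Be by simp
  also have "\<dots> = A + N*(x+1)*x*(x-1)/(2*(2*x-1)) - 2*S1 - N" by (simp only: Ae)
  also have "\<dots> = N*(x+1)/2 + N*(x+1)*x*(x-1)/(2*(2*x-1)) - N*(x-1) - N" using AN S1e by linarith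
  finally have S2e: "S2 = N*(x+1)/2 + N*(x+1)*x*(x-1)/(2*(2*x-1)) - N*(x-1) - N" .
  show "S2 / N = (x + 1) / 2 + (x + 1) * x * (x - 1) / (2 * (2 * x - 1)) - x"
    unfolding S2e using Np x by (simp add: field_simps)
qed

lemma moments:
  assumes n: "n \<ge> 2"
  shows "real (card (dyck n)) > 0"
    "(\<Sum>g\<in>dyck n. real (val g)) / real (card (dyck n)) = (real n - 1) / 2"
    "(\<Sum>g\<in>dyck n. real (val g)^2) / real (card (dyck n)) = (real n + 1) / 2 + (real n + 1) * real n * (real n - 1) / (2 * (2 * real n - 1)) - real n"
proof -
  let ?L = "2*n+1"
  let ?N = "real (card (dyck n))"
  let ?A = "real ((2*n-1) choose n)"
  let ?B = "real ((2*n-3) choose (n-1))"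
  let ?C = "real ((2*n+1) choose (n+1))"
  have n1: "n \<ge> 1" using n by simp
  have t0: "real ?L * ?N = ?C"
  proof -
    have "(\<Sum>w\<in>W n. (\<lambda>_. 1::real) (cdu w)) = real ?L * (\<Sum>g\<in>dyck n. (\<lambda>_. 1::real) (val g + 1))"
      by (rule transfer[OF n1])
    moreover have "(\<Sum>w\<in>W n. (\<lambda>_. 1::real) (cdu w)) = (\<Sum>S\<in>Sub n. (\<lambda>_. 1::real) (cduS ?L S))"
      by (rule sum_W_Sub)
    ultimately show ?thesis using card_Sub[of n] by simp
  qed
  have t1: "real ?L * (\<Sum>g\<in>dyck n. real (val g) + 1) = real ?L * ?A"
  proof -
    have "(\<Sum>w\<in>W n. (\<lambda>k. real k) (cdu w)) = real ?L * (\<Sum>g\<in>dyck n. (\<lambda>k. real k) (val g + 1))"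
      by (rule transfer[OF n1])
    moreover have "(\<Sum>w\<in>W n. (\<lambda>k. real k) (cdu w)) = (\<Sum>S\<in>Sub n. (\<lambda>k. real k) (cduS ?L S))"
      by (rule sum_W_Sub)
    ultimately show ?thesis using sum_S1[OF n1] by (simp add: add.commute)
  qed
  have t2: "real ?L * (\<Sum>g\<in>dyck n. (real (val g) + 1)^2) = real ?L * (?A + (real ?L - 3) * ?B)"
  proof -
    have "(\<Sum>w\<in>W n. (\<lambda>k. real k^2) (cdu w)) = real ?L * (\<Sum>g\<in>dyck n. (\<lambda>k. real k^2) (val g + 1))"
      by (rule transfer[OF n1])
    moreover have "(\<Sum>w\<in>W n. (\<lambda>k. real k^2) (cdu w)) = (\<Sum>S\<in>Sub n. (\<lambda>k. real k^2) (cduS ?L S))"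
      by (rule sum_W_Sub)
    ultimately show ?thesis using sum_S2[OF n] by (simp add: add.commute)
  qed
  have s1: "(\<Sum>g\<in>dyck n. real (val g)) + ?N = ?A" using t1 by (simp add: sum.distrib)
  have s2: "(\<Sum>g\<in>dyck n. real (val g)^2) + 2 * (\<Sum>g\<in>dyck n. real (val g)) + ?N = ?A + (2 * real n - 2) * ?B"
  proof -
    have "(\<Sum>g\<in>dyck n. (real (val g) + 1)^2) = (\<Sum>g\<in>dyck n. real (val g)^2 + 2 * real (val g) + 1)"
      by (intro sum.cong refl) (simp add: power2_eq_square algebra_simps)
    also have "\<dots> = (\<Sum>g\<in>dyck n. real (val g)^2) + 2 * (\<Sum>g\<in>dyck n. real (val g)) + ?N"
      by (simp add: sum.distrib sum_distrib_left)
    finally show ?thesis using t2 by simp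
  qed
  obtain j where j: "n = j + 2" using n by (metis add.commute le_iff_add)
  have b1: "?C * ((real n + 1) * real n) = ?A * ((2 * real n + 1) * (2 * real n))"
  proof -
    have "real (((2*n+1) choose (n+1)) * ((n+1)*n)) = real (((2*n-1) choose n) * ((2*n+1)*(2*n)))"
      using b1[OF j] by (simp only:)
    then show ?thesis by (simp only: of_nat_mult of_nat_add of_nat_1 of_nat_numeral)
  qed
  have b2: "?A * (real n * (real n - 1)) = ?B * ((2 * real n - 1) * (2 * real n - 2))"
  proof -
    have "real (((2*n-1) choose n) * (n*(n-1))) = real (((2*n-3) choose (n-1)) * ((2*n-1)*(2*n-2)))"
      using b2[OF j] by (simp only:)
    then show ?thesis using n by (simp add: of_nat_diff)
  qed
  have Apos: "?A > 0" using n by simp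
  have h0: "?N * (real n + 1) = 2 * ?A"
  proof -
    have "(real ?L * ?N) * ((real n + 1) * real n) = ?A * ((2 * real n + 1) * (2 * real n))"
      using t0 b1 by (simp del: binomial_Suc_Suc)
    then have "(2 * real n + 1) * real n * (?N * (real n + 1)) = (2 * real n + 1) * real n * (2 * ?A)"
      by (simp add: algebra_simps)
    moreover have "(2 * real n + 1) * real n \<noteq> 0" using n by simp
    ultimately show ?thesis by simp
  qed
  note R = alg[of "real n" ?A ?N "\<Sum>g\<in>dyck n. real (val g)" "\<Sum>g\<in>dyck n. real (val g)^2" ?B]
  show "?N > 0" using R n Apos h0 s1 s2 b2 by simp
  show "(\<Sum>g\<in>dyck n. real (val g)) / ?N = (real n - 1) / 2" using R n Apos h0 s1 s2 b2 by simp
  show "(\<Sum>g\<in>dyck n. real (val g)^2) / ?N = (real n + 1) / 2 + (real n + 1) * real n * (real n - 1) / (2 * (2 * real n - 1)) - real n"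
    using R n Apos h0 s1 s2 b2 by simp
qed




lemma cube_bound:
  fixes v :: "'a \<Rightarrow> real"
  assumes fin: "finite D" and N: "N = real (card D)" "N > 0"
    and S1: "(\<Sum>g\<in>D. v g) = N * \<mu>" and S2: "(\<Sum>g\<in>D. v g^2) = N * e2"
    and K: "\<And>g. g \<in> D \<Longrightarrow> \<bar>v g - \<mu>\<bar> \<le> K"
  shows "(\<Sum>g\<in>D. v g^3) / N \<le> \<mu>^3 + (3*\<mu> + K) * (e2 - \<mu>^2)"
    "(\<Sum>g\<in>D. v g^3) / N \<ge> \<mu>^3 + (3*\<mu> - K) * (e2 - \<mu>^2)"
proof -
  have pw: "\<And>g. g \<in> D \<Longrightarrow> v g^3 \<le> \<mu>^3 + 3*\<mu>^2*(v g - \<mu>) + (3*\<mu> + K)*(v g - \<mu>)^2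
      \<and> v g^3 \<ge> \<mu>^3 + 3*\<mu>^2*(v g - \<mu>) + (3*\<mu> - K)*(v g - \<mu>)^2"
  proof -
    fix g assume g: "g \<in> D"
    define d where "d = v g - \<mu>"
    have vd: "v g = \<mu> + d" unfolding d_def by simp
    have dK: "\<bar>d\<bar> \<le> K" using K[OF g] unfolding d_def .
    have "d^3 \<le> K * d^2" "d^3 \<ge> - K * d^2"
    proof -
      have "d^2 \<ge> 0" by simp
      have "d^3 = d * d^2" by (simp add: power2_eq_square power3_eq_cube)
      have a: "d \<le> K" "- K \<le> d" using dK by (auto simp: abs_le_iff)
      have "d * d^2 \<le> K * d^2" using mult_right_mono[OF a(1) \<open>d^2 \<ge> 0\<close>] .
      then show "d^3 \<le> K * d^2" using \<open>d^3 = d * d^2\<close> by simp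
      have "- K * d^2 \<le> d * d^2" using mult_right_mono[OF a(2) \<open>d^2 \<ge> 0\<close>] .
      then show "d^3 \<ge> - K * d^2" using \<open>d^3 = d * d^2\<close> by simp
    qed
    moreover have "v g^3 = \<mu>^3 + 3*\<mu>^2*d + 3*\<mu>*d^2 + d^3"
      unfolding vd by (simp add: power2_eq_square power3_eq_cube algebra_simps)
    ultimately show "v g^3 \<le> \<mu>^3 + 3*\<mu>^2*(v g - \<mu>) + (3*\<mu> + K)*(v g - \<mu>)^2
      \<and> v g^3 \<ge> \<mu>^3 + 3*\<mu>^2*(v g - \<mu>) + (3*\<mu> - K)*(v g - \<mu>)^2"
      unfolding d_def[symmetric] by (simp add: algebra_simps)
  qed
  have sumq: "\<And>c. (\<Sum>g\<in>D. \<mu>^3 + 3*\<mu>^2*(v g - \<mu>) + c*(v g - \<mu>)^2) = N * \<mu>^3 + c * (N*e2 - N*\<mu>^2)"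
  proof -
    fix c
    have "(\<Sum>g\<in>D. \<mu>^3 + 3*\<mu>^2*(v g - \<mu>) + c*(v g - \<mu>)^2)
        = (\<Sum>g\<in>D. \<mu>^3 + 3*\<mu>^2*v g - 3*\<mu>^3 + c*(v g^2) - 2*c*\<mu>*v g + c*\<mu>^2)"
      by (intro sum.cong refl) (simp add: power2_eq_square power3_eq_cube algebra_simps)
    also have "\<dots> = N*\<mu>^3 + 3*\<mu>^2*(\<Sum>g\<in>D. v g) - N*3*\<mu>^3 + c*(\<Sum>g\<in>D. v g^2) - 2*c*\<mu>*(\<Sum>g\<in>D. v g) + N*c*\<mu>^2"
      using N by (simp add: sum.distrib sum_subtractf sum_distrib_left)
    also have "\<dots> = N * \<mu>^3 + c * (N*e2 - N*\<mu>^2)"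
      unfolding S1 S2 by (simp add: power2_eq_square power3_eq_cube algebra_simps)
    finally show "(\<Sum>g\<in>D. \<mu>^3 + 3*\<mu>^2*(v g - \<mu>) + c*(v g - \<mu>)^2) = N * \<mu>^3 + c * (N*e2 - N*\<mu>^2)" .
  qed
  have "(\<Sum>g\<in>D. v g^3) \<le> N * \<mu>^3 + (3*\<mu> + K) * (N*e2 - N*\<mu>^2)"
    unfolding sumq[symmetric] by (intro sum_mono) (use pw in blast)
  then show "(\<Sum>g\<in>D. v g^3) / N \<le> \<mu>^3 + (3*\<mu> + K) * (e2 - \<mu>^2)"
    using N by (simp add: field_simps)
  have "(\<Sum>g\<in>D. v g^3) \<ge> N * \<mu>^3 + (3*\<mu> - K) * (N*e2 - N*\<mu>^2)"
    unfolding sumq[symmetric] by (intro sum_mono) (use pw in blast)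
  then show "(\<Sum>g\<in>D. v g^3) / N \<ge> \<mu>^3 + (3*\<mu> - K) * (e2 - \<mu>^2)"
    using N by (simp add: field_simps)
qed

definition mu :: "real \<Rightarrow> real" where "mu x = (x - 1) / 2"
definition e2 :: "real \<Rightarrow> real" where
  "e2 x = (x + 1) / 2 + (x + 1) * x * (x - 1) / (2 * (2 * x - 1)) - x"
definition Up :: "real \<Rightarrow> real" where
  "Up x = mu x ^ 3 + (3 * mu x + 2 * x) * (e2 x - mu x ^ 2) + 3 * e2 x + 2 * mu x"
definition Lo :: "real \<Rightarrow> real" where
  "Lo x = mu x ^ 3 + (3 * mu x - 2 * x) * (e2 x - mu x ^ 2) - 3 * e2 x + 2 * mu x"

lemma hasse_bounds:
  assumes n: "n \<ge> 2"
  shows "Lo (real n) \<le> hasse_index (dyck n) dyck_lt 3" "hasse_index (dyck n) dyck_lt 3 \<le> Up (real n)"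
proof -
  let ?N = "real (card (dyck n))"
  let ?v = "\<lambda>g. real (val g)"
  have Np: "?N > 0" using moments(1)[OF n] .
  have m1: "(\<Sum>g\<in>dyck n. ?v g) = ?N * mu (real n)"
    using moments(2)[OF n] Np unfolding mu_def by (simp add: field_simps)
  have m2: "(\<Sum>g\<in>dyck n. ?v g^2) = ?N * e2 (real n)"
    using moments(3)[OF n] Np unfolding e2_def by (simp add: field_simps)
  have K: "\<And>g. g \<in> dyck n \<Longrightarrow> \<bar>?v g - mu (real n)\<bar> \<le> 2 * real n"
  proof -
    fix g assume "g \<in> dyck n"
    then have "val g \<le> 2*n" using val_le[of g] by (simp add: dyck_def)
    then have "?v g \<le> 2 * real n" by linarith
    moreover have "real n \<ge> 2" "?v g \<ge> 0" using n by auto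
    ultimately show "\<bar>?v g - mu (real n)\<bar> \<le> 2 * real n" unfolding mu_def abs_le_iff
      by (auto simp: field_simps)
  qed
  note cb = cube_bound[OF finite_dyck refl Np m1 m2 K]
  have h: "hasse_index (dyck n) dyck_lt 3 = real (sc (dyck n) dyck_lt 3) / ?N"
    by (simp add: hasse_index_def)
  have eU: "(\<Sum>g\<in>dyck n. ?v g * (?v g + 1) * (?v g + 2)) = (\<Sum>g\<in>dyck n. ?v g^3) + 3 * (\<Sum>g\<in>dyck n. ?v g^2) + 2 * (\<Sum>g\<in>dyck n. ?v g)"
    by (simp add: sum.distrib sum_distrib_left power2_eq_square power3_eq_cube algebra_simps)
  have eL: "(\<Sum>g\<in>dyck n. ?v g * (?v g - 1) * (?v g - 2)) = (\<Sum>g\<in>dyck n. ?v g^3) - 3 * (\<Sum>g\<in>dyck n. ?v g^2) + 2 * (\<Sum>g\<in>dyck n. ?v g)"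
    by (simp add: sum.distrib sum_subtractf sum_distrib_left power2_eq_square power3_eq_cube algebra_simps)
  have "hasse_index (dyck n) dyck_lt 3 \<le> ((\<Sum>g\<in>dyck n. ?v g^3) + 3 * (\<Sum>g\<in>dyck n. ?v g^2) + 2 * (\<Sum>g\<in>dyck n. ?v g)) / ?N"
    unfolding h eU[symmetric] using sc_bounds(1)[of n] Np by (simp add: divide_right_mono)
  also have "\<dots> = (\<Sum>g\<in>dyck n. ?v g^3) / ?N + 3 * e2 (real n) + 2 * mu (real n)"
    unfolding m1 m2 using Np by (simp add: field_simps)
  also have "\<dots> \<le> Up (real n)" using cb(1) unfolding Up_def by simp
  finally show "hasse_index (dyck n) dyck_lt 3 \<le> Up (real n)" .
  have "Lo (real n) \<le> (\<Sum>g\<in>dyck n. ?v g^3) / ?N - 3 * e2 (real n) + 2 * mu (real n)"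
    using cb(2) unfolding Lo_def by simp
  also have "\<dots> = ((\<Sum>g\<in>dyck n. ?v g^3) - 3 * (\<Sum>g\<in>dyck n. ?v g^2) + 2 * (\<Sum>g\<in>dyck n. ?v g)) / ?N"
    unfolding m1 m2 using Np by (simp add: field_simps)
  also have "\<dots> \<le> hasse_index (dyck n) dyck_lt 3"
    unfolding h eL[symmetric] using sc_bounds(2)[of n] Np by (simp add: divide_right_mono)
  finally show "Lo (real n) \<le> hasse_index (dyck n) dyck_lt 3" .
qed

lemma Up_lim: "((\<lambda>n. Up (real n) / (real n ^ 3 / 8)) \<longlongrightarrow> 1) at_top"
  unfolding Up_def mu_def e2_def by real_asymp (simp add: power2_eq_square power3_eq_cube)

lemma Lo_lim: "((\<lambda>n. Lo (real n) / (real n ^ 3 / 8)) \<longlongrightarrow> 1) at_top"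
  unfolding Lo_def mu_def e2_def by real_asymp (simp add: power2_eq_square power3_eq_cube)

theorem mainTheorem9:
  shows "(\<lambda>n. hasse_index (dyck n) dyck_lt 3) \<sim>[at_top] (\<lambda>n. real n ^ 3 / 8)"
proof (rule asymp_equivI')
  show "((\<lambda>n. hasse_index (dyck n) dyck_lt 3 / (real n ^ 3 / 8)) \<longlongrightarrow> 1) at_top"
  proof (rule tendsto_sandwich[OF _ _ Lo_lim Up_lim])
    show "\<forall>\<^sub>F n in at_top. Lo (real n) / (real n ^ 3 / 8) \<le> hasse_index (dyck n) dyck_lt 3 / (real n ^ 3 / 8)"
      using eventually_ge_at_top[of "2::nat"]
      by eventually_elim (use hasse_bounds(1) in \<open>auto intro: divide_right_mono\<close>)
    show "\<forall>\<^sub>F n in at_top. hasse_index (dyck n) dyck_lt 3 / (real n ^ 3 / 8) \<le> Up (real n) / (real n ^ 3 / 8)"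
      using eventually_ge_at_top[of "2::nat"]
      by eventually_elim (use hasse_bounds(2) in \<open>auto intro: divide_right_mono\<close>)
  qed
qed


end
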